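(* Let $b>0$, $\sigma>0$, $p>0$, and let $A$, $c$, $\phi$ be as follows: $A\subseteq\mathbb{R}$ is closed with smallest element $\theta_*$; $c:A\to\mathbb{R}$ is nondecreasing and left-continuous with $c(\theta_* )=0$, $c(x)>0$ for $x>\theta_*$, and, if $A$ is unbounded, $\inf\{c(x)/x:x\in A,x\ge y\}\uparrow\infty$ as $y\uparrow\infty$; $\phi(y)=\sup_{x\in A}\{yx-c(x)\}$ for $y\ge0$. Let $\gamma(p)$ be the unique number in $(\phi_*(p),\infty)$, where $\phi_*(p)=-\inf\{\phi(y):y\in[0,p]\}$, with $\tfrac12\sigma^2\int_0^p\frac{du}{\phi(u)+\gamma(p)}=b$; let $G(v,p)=\tfrac12\sigma^2\int_0^v\frac{du}{\phi(u)+\gamma(p)}$ for $v\in[0,p]$; let $v(\cdot,p):[0,b]\to[0,p]$ be the inverse of $G(\cdot,p)$; and let $f(z,p)=\int_0^z v(y,p)\,dy$ for $z\in[0,b]$. Then $f(\cdot,p)$ is nonnegative, nondecreasing, strictly convex and belongs to $\mathcal{C}^2[0,b]$. Moreover, $f=f(\cdot,p)$ and $\gamma=\gamma(p)$ satisfy $$\gamma=\min_{x\in A}\Big\{\tfrac12\sigma^2f''(z)-xf'(z)+c(x)\Big\}\quad\text{for all }z\in(0,b),$$ together with the boundary conditions $f'(0)=0$ and $f'(b)=p$.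
   Context: $\mathcal{C}^2[0,b]$ is the space of functions $f:[0,b]\to\mathbb{R}$ that are twice continuously differentiable on $(0,b)$ with first and second derivatives having finite limits at the endpoints. The supremum defining $\phi(y)$ is finite and attained for each $y\ge0$. *)

theory Defs
  imports "HOL-Analysis.Analysis"
begin

definition strict_convex_on :: "real set \<Rightarrow> (real \<Rightarrow> real) \<Rightarrow> bool" where
  "strict_convex_on S f \<longleftrightarrow>
     (\<forall>x\<in>S. \<forall>y\<in>S. x \<noteq> y \<longrightarrow>
        (\<forall>t. 0 < t \<and> t < 1 \<longrightarrow> f (t * x + (1 - t) * y) < t * f x + (1 - t) * f y))"

definition C2_closed :: "real \<Rightarrow> (real \<Rightarrow> real) \<Rightarrow> bool" where
  "C2_closed b f \<longleftrightarrow>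
     (\<forall>z\<in>{0<..<b}. f differentiable (at z) \<and> deriv f differentiable (at z)) \<and>
     continuous_on {0<..<b} (deriv (deriv f)) \<and>
     (\<exists>L. (deriv f \<longlongrightarrow> L) (at_right 0)) \<and> (\<exists>L. (deriv f \<longlongrightarrow> L) (at_left b)) \<and>
     (\<exists>L. (deriv (deriv f) \<longlongrightarrow> L) (at_right 0)) \<and> (\<exists>L. (deriv (deriv f) \<longlongrightarrow> L) (at_left b))"

definition phi :: "real set \<Rightarrow> (real \<Rightarrow> real) \<Rightarrow> real \<Rightarrow> real" where
  "phi A c y = (SUP x\<in>A. y * x - c x)"

definition phi_star :: "real set \<Rightarrow> (real \<Rightarrow> real) \<Rightarrow> real \<Rightarrow> real" where
  "phi_star A c p = - (INF y\<in>{0..p}. phi A c y)"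

definition gamma :: "real set \<Rightarrow> (real \<Rightarrow> real) \<Rightarrow> real \<Rightarrow> real \<Rightarrow> real \<Rightarrow> real" where
  "gamma A c \<sigma> b p = (THE g. phi_star A c p < g \<and>
      (1/2) * \<sigma>\<^sup>2 * integral {0..p} (\<lambda>u. 1 / (phi A c u + g)) = b)"

definition G :: "real set \<Rightarrow> (real \<Rightarrow> real) \<Rightarrow> real \<Rightarrow> real \<Rightarrow> real \<Rightarrow> real \<Rightarrow> real" where
  "G A c \<sigma> b p v = (1/2) * \<sigma>\<^sup>2 * integral {0..v} (\<lambda>u. 1 / (phi A c u + gamma A c \<sigma> b p))"

definition vinv :: "real set \<Rightarrow> (real \<Rightarrow> real) \<Rightarrow> real \<Rightarrow> real \<Rightarrow> real \<Rightarrow> real \<Rightarrow> real" where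
  "vinv A c \<sigma> b p z = (THE v. v \<in> {0..p} \<and> G A c \<sigma> b p v = z)"

definition ff :: "real set \<Rightarrow> (real \<Rightarrow> real) \<Rightarrow> real \<Rightarrow> real \<Rightarrow> real \<Rightarrow> real \<Rightarrow> real" where
  "ff A c \<sigma> b p z = integral {0..z} (vinv A c \<sigma> b p)"

end

theory Submission
  imports Defs
begin

lemma log_int1:
  fixes L e a d :: real
  assumes "L > 0" "e > 0" "a \<le> d"
  shows "((\<lambda>u. 1/(L*(u-a)+e)) has_integral (ln(L*(d-a)+e) - ln e)/L) {a..d}"
proof -
  have "((\<lambda>u. 1/(L*(u-a)+e)) has_integral ((\<lambda>u. ln(L*(u-a)+e)/L) d - (\<lambda>u. ln(L*(u-a)+e)/L) a)) {a..d}"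
  proof (rule fundamental_theorem_of_calculus[OF assms(3)])
    fix x assume x: "x \<in> {a..d}"
    then have pos: "L*(x-a)+e > 0" using assms by (auto intro: add_nonneg_pos)
    have "((\<lambda>u. ln(L*(u-a)+e)/L) has_real_derivative 1/(L*(x-a)+e)) (at x)"
      using pos assms(1) mult_pos_pos[OF mult_pos_pos[OF assms(1) assms(1)] pos]
      by (auto intro!: derivative_eq_intros simp: field_simps)
    then show "((\<lambda>u. ln(L*(u-a)+e)/L) has_vector_derivative 1/(L*(x-a)+e)) (at x within {a..d})"
      using has_field_derivative_at_within has_real_derivative_iff_has_vector_derivative by blast
  qed
  then show ?thesis by (simp add: diff_divide_distrib)
qed

lemma log_int2:
  fixes L e a d :: real
  assumes "L > 0" "e > 0" "a \<le> d"
  shows "((\<lambda>u. 1/(L*(d-u)+e)) has_integral (ln(L*(d-a)+e) - ln e)/L) {a..d}"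
proof -
  have "((\<lambda>u. 1/(L*(d-u)+e)) has_integral ((\<lambda>u. - ln(L*(d-u)+e)/L) d - (\<lambda>u. - ln(L*(d-u)+e)/L) a)) {a..d}"
  proof (rule fundamental_theorem_of_calculus[OF assms(3)])
    fix x assume x: "x \<in> {a..d}"
    then have pos: "L*(d-x)+e > 0" using assms by (auto intro: add_nonneg_pos)
    have "((\<lambda>u. - ln(L*(d-u)+e)/L) has_real_derivative 1/(L*(d-x)+e)) (at x)"
      using pos assms(1) mult_pos_pos[OF mult_pos_pos[OF assms(1) assms(1)] pos]
      by (auto intro!: derivative_eq_intros simp: field_simps)
    then show "((\<lambda>u. - ln(L*(d-u)+e)/L) has_vector_derivative 1/(L*(d-x)+e)) (at x within {a..d})"
      using has_field_derivative_at_within has_real_derivative_iff_has_vector_derivative by blast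
  qed
  then show ?thesis by (simp add: diff_divide_distrib)
qed

lemma integral_diff_bound:
  fixes f g :: "real \<Rightarrow> real"
  assumes "f integrable_on {0..q}" "g integrable_on {0..q}" "q \<ge> 0"
    "\<And>u. u \<in> {0..q} \<Longrightarrow> \<bar>f u - g u\<bar> \<le> C"
  shows "\<bar>integral {0..q} f - integral {0..q} g\<bar> \<le> q * C"
proof -
  have d: "integral {0..q} (\<lambda>u. f u - g u) = integral {0..q} f - integral {0..q} g"
    by (rule integral_diff[OF assms(1,2)])
  have i1: "(\<lambda>u. f u - g u) integrable_on {0..q}" using assms(1,2) by (rule integrable_diff)
  have i2: "(\<lambda>u. g u - f u) integrable_on {0..q}" using assms(1,2) by (intro integrable_diff)
  have "integral {0..q} (\<lambda>u. f u - g u) \<le> integral {0..q} (\<lambda>u. C)"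
    using assms(4) by (intro integral_le[OF i1]) (auto simp: abs_le_iff)
  moreover have "integral {0..q} (\<lambda>u. g u - f u) \<le> integral {0..q} (\<lambda>u. C)"
    using assms(4) by (intro integral_le[OF i2]) (auto simp: abs_le_iff)
  moreover have "integral {0..q} (\<lambda>u. g u - f u) = integral {0..q} g - integral {0..q} f"
    by (rule integral_diff[OF assms(2,1)])
  ultimately show ?thesis using d assms(3) by (auto simp: abs_le_iff)
qed

lemma strict_convex_from_deriv:
  fixes f d :: "real \<Rightarrow> real"
  assumes ab: "a < b'" and cont: "continuous_on {a..b'} f"
    and der: "\<And>x. x \<in> {a<..<b'} \<Longrightarrow> (f has_real_derivative d x) (at x)"
    and inc: "\<And>x y. x \<in> {a<..<b'} \<Longrightarrow> y \<in> {a<..<b'} \<Longrightarrow> x < y \<Longrightarrow> d x < d y"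
  shows "strict_convex_on {a..b'} f"
proof -
  have key: "f (t*x + (1-t)*y) < t * f x + (1-t) * f y"
    if xy: "x \<in> {a..b'}" "y \<in> {a..b'}" "x < y" and t: "0 < t" "t < 1" for x y t :: real
  proof -
    define m where "m = t*x + (1-t)*y"
    have mx: "m - x = (1-t)*(y-x)" and ym: "y - m = t*(y-x)" unfolding m_def by (simp_all add: algebra_simps)
    have p1: "(1-t)*(y-x) > 0" using t xy by (intro mult_pos_pos) auto
    have p2: "t*(y-x) > 0" using t xy by (intro mult_pos_pos) auto
    have xm: "x < m" using mx p1 by linarith
    have my: "m < y" using ym p2 by linarith
    have diff: "f differentiable (at z)" if "a < z" "z < b'" for z
      using der[of z] that by (auto simp: real_differentiable_def)
    obtain l1 z1 where z1: "x < z1" "z1 < m" "(f has_real_derivative l1) (at z1)" "f m - f x = (m - x) * l1"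
      using MVT[OF xm continuous_on_subset[OF cont] diff] xy my by (force)
    obtain l2 z2 where z2: "m < z2" "z2 < y" "(f has_real_derivative l2) (at z2)" "f y - f m = (y - m) * l2"
      using MVT[OF my continuous_on_subset[OF cont] diff] xy xm by (force)
    have z1i: "z1 \<in> {a<..<b'}" and z2i: "z2 \<in> {a<..<b'}" using z1 z2 xy xm my by auto
    have "l1 = d z1" using DERIV_unique[OF z1(3) der[OF z1i]] .
    moreover have "l2 = d z2" using DERIV_unique[OF z2(3) der[OF z2i]] .
    ultimately have l12: "l1 < l2" using inc[OF z1i z2i] z1 z2 by auto
    have e1: "f x = f m - (1-t)*(y-x)*l1" using z1(4) mx by simp
    have e2: "f y = f m + t*(y-x)*l2" using z2(4) ym by simp
    have "t * f x + (1-t) * f y - f m = t*(1-t)*(y-x)*(l2-l1)"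
      unfolding e1 e2 by (simp add: algebra_simps)
    moreover have "t*(1-t)*(y-x)*(l2-l1) > 0" using t xy l12 by (intro mult_pos_pos) auto
    ultimately show ?thesis unfolding m_def by linarith
  qed
  show ?thesis unfolding strict_convex_on_def
  proof (intro ballI impI allI)
    fix x y t :: real assume xy: "x \<in> {a..b'}" "y \<in> {a..b'}" "x \<noteq> y" and t: "0 < t \<and> t < 1"
    show "f (t*x + (1-t)*y) < t * f x + (1-t) * f y"
    proof (cases "x < y")
      case True then show ?thesis using key xy t by auto
    next
      case False
      then have "y < x" using xy by auto
      from key[OF xy(2,1) this, of "1-t"] t show ?thesis by (simp add: algebra_simps)
    qed
  qed
qed

locale P7 =
  fixes A :: "real set" and c :: "real \<Rightarrow> real" and b \<sigma> p \<theta> :: real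
  assumes b_pos: "b > 0" and sigma_pos: "\<sigma> > 0" and p_pos: "p > 0"
    and A_closed: "closed A"
    and theta_in: "\<theta> \<in> A" and theta_min: "\<forall>x\<in>A. \<theta> \<le> x"
    and c_mono: "mono_on A c"
    and c_leftcont: "\<forall>x\<in>A. continuous (at x within (A \<inter> {..x})) c"
    and c_theta: "c \<theta> = 0"
    and c_pos: "\<forall>x\<in>A. x > \<theta> \<longrightarrow> c x > 0"
    and c_growth: "\<not> bdd_above A \<longrightarrow>
        filterlim (\<lambda>y. Inf {c x / x | x. x \<in> A \<and> x \<ge> y}) at_top at_top"
begin

lemma c_nonneg: "x \<in> A \<Longrightarrow> c x \<ge> 0"
  using c_mono theta_in theta_min c_theta by (metis mono_onD)

lemma bound_Y: "\<exists>Y. \<theta> \<le> Y \<and> (\<forall>y\<in>{0..p}. \<forall>x\<in>A. x > Y \<longrightarrow> y*x - c x < y*\<theta>)"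
proof (cases "bdd_above A")
  case True
  then obtain B where B: "\<forall>x\<in>A. x \<le> B" by (auto simp: bdd_above_def)
  show ?thesis by (rule exI[of _ "max \<theta> B"]) (use B in auto)
next
  case False
  have "filterlim (\<lambda>y. Inf {c x / x | x. x \<in> A \<and> x \<ge> y}) at_top at_top"
    using c_growth[rule_format, OF False] .
  then have "\<forall>\<^sub>F y in at_top. p + 1 \<le> Inf {c x / x | x. x \<in> A \<and> x \<ge> y}"
    by (simp add: filterlim_at_top)
  then obtain N where N: "\<And>y. y \<ge> N \<Longrightarrow> p + 1 \<le> Inf {c x / x | x. x \<in> A \<and> x \<ge> y}"
    by (auto simp: eventually_at_top_linorder)
  define Y where "Y = max N (max (\<theta>+1) (max 1 (p*\<bar>\<theta>\<bar>+1)))"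
  have I: "p + 1 \<le> Inf {c x / x | x. x \<in> A \<and> x \<ge> Y}" using N[of Y] Y_def by (simp del: max.bounded_iff)
  have bb: "bdd_below {c x / x | x. x \<in> A \<and> x \<ge> Y}"
  proof (rule bdd_belowI[of _ 0], clarify)
    fix x assume "x \<in> A" "Y \<le> x"
    then have "x > \<theta>" "x > 0" using Y_def by auto
    then show "0 \<le> c x / x" using c_pos \<open>x \<in> A\<close> by auto
  qed
  show ?thesis
  proof (rule exI[of _ Y], intro conjI ballI impI)
    show "\<theta> \<le> Y" using Y_def by auto
    fix y x assume y: "y \<in> {0..p}" and x: "x \<in> A" "Y < x"
    have "c x / x \<ge> p + 1" using I cInf_lower[OF _ bb, of "c x / x"] x by force
    moreover have xpos: "x > 0" using x Y_def by auto
    ultimately have cx: "c x \<ge> (p+1) * x" by (simp add: field_simps)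
    have "y * x \<le> p * x" using y xpos by (intro mult_right_mono) auto
    then have "y*x - c x \<le> - x" using cx by (simp add: algebra_simps)
    also have "\<dots> < - (p*\<bar>\<theta>\<bar>)" using x Y_def by auto
    also have "\<dots> \<le> - (y*\<bar>\<theta>\<bar>)" using y by (intro le_imp_neg_le mult_right_mono) auto
    also have "\<dots> \<le> y * \<theta>" using y by (cases "\<theta> \<ge> 0") auto
    finally show "y*x - c x < y*\<theta>" .
  qed
qed

lemma argmax_exists:
  assumes Y: "\<theta> \<le> Y" "\<forall>y\<in>{0..p}. \<forall>x\<in>A. x > Y \<longrightarrow> y*x - c x < y*\<theta>"
    and y: "y \<in> {0..p}"
  shows "\<exists>l\<in>A. \<theta> \<le> l \<and> l \<le> Y \<and> (\<forall>x'\<in>A. y*x' - c x' \<le> y*l - c l)"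
proof -
  define h where "h x = y*x - c x" for x
  define K where "K = A \<inter> {\<theta>..Y}"
  have cK: "compact K" unfolding K_def by (rule closed_Int_compact[OF A_closed compact_Icc])
  have thK: "\<theta> \<in> K" using theta_in Y unfolding K_def by auto
  have y0: "0 \<le> y" using y by auto
  have bdd: "bdd_above (h ` K)"
  proof (rule bdd_aboveI[of _ "y*Y"], clarify)
    fix x assume "x \<in> K"
    then have "x \<in> A" "x \<le> Y" unfolding K_def by auto
    then show "h x \<le> y*Y" unfolding h_def using c_nonneg[of x] mult_left_mono[OF \<open>x \<le> Y\<close> y0] by auto
  qed
  define S where "S = Sup (h ` K)"
  have ne: "h ` K \<noteq> {}" using thK by auto
  have "\<forall>n::nat. \<exists>x\<in>K. S - 1/(real n + 1) < h x"
  proof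
    fix n :: nat
    have "S - 1/(real n + 1) < S" by simp
    then obtain z where "z \<in> h ` K" "S - 1/(real n + 1) < z" using less_cSupD[OF ne] S_def by metis
    then show "\<exists>x\<in>K. S - 1/(real n + 1) < h x" by auto
  qed
  then obtain xs where xs: "\<And>n. xs n \<in> K" "\<And>n. S - 1/(real n + 1) < h (xs n)" by metis
  obtain l r where l: "l \<in> K" "strict_mono r" "(xs \<circ> r) \<longlonglongrightarrow> l"
    using compact_imp_seq_compact[OF cK] xs(1) unfolding seq_compact_def by metis
  have lA: "l \<in> A" using l K_def by auto
  have usc: "\<exists>\<delta>>0. \<forall>x\<in>A. \<bar>x - l\<bar> < \<delta> \<longrightarrow> h x < h l + \<epsilon>" if e: "\<epsilon> > 0" for \<epsilon>
  proof -
    have "continuous (at l within (A \<inter> {..l})) c" using c_leftcont lA by auto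
    then obtain d1 where d1: "d1 > 0" "\<forall>x'\<in>A \<inter> {..l}. dist x' l < d1 \<longrightarrow> dist (c x') (c l) < \<epsilon>"
      unfolding continuous_within_eps_delta using e by metis
    define d where "d = min d1 (\<epsilon>/(y+1))"
    have dpos: "d > 0" using d1 e y0 unfolding d_def by auto
    show ?thesis
    proof (rule exI[of _ d], intro conjI dpos ballI impI)
      fix x assume x: "x \<in> A" "\<bar>x - l\<bar> < d"
      show "h x < h l + \<epsilon>"
      proof (cases "x \<le> l")
        case True
        then have "\<bar>c x - c l\<bar> < \<epsilon>" using d1(2) x unfolding d_def dist_real_def by auto
        moreover have "y*x \<le> y*l" using True y0 by (simp add: mult_left_mono)
        ultimately show ?thesis unfolding h_def by auto
      next
        case False
        then have "c l \<le> c x" using c_mono lA x by (auto intro: mono_onD)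
        moreover have "y*(x - l) < \<epsilon>"
        proof -
          have "x - l < \<epsilon>/(y+1)" using x False unfolding d_def by auto
          then have "y*(x-l) \<le> y*(\<epsilon>/(y+1))" using y0 by (intro mult_left_mono) auto
          also have "\<dots> < \<epsilon>" using y0 e by (simp add: field_simps)
          finally show ?thesis .
        qed
        ultimately show ?thesis unfolding h_def by (simp add: algebra_simps)
      qed
    qed
  qed
  have Sle: "S \<le> h l"
  proof (rule ccontr)
    assume "\<not> S \<le> h l"
    define \<epsilon> where "\<epsilon> = (S - h l)/3"
    have e: "\<epsilon> > 0" using \<open>\<not> S \<le> h l\<close> unfolding \<epsilon>_def by auto
    obtain \<delta> where \<delta>: "\<delta> > 0" "\<forall>x\<in>A. \<bar>x - l\<bar> < \<delta> \<longrightarrow> h x < h l + \<epsilon>" using usc[OF e] by auto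
    obtain N1 where N1: "\<forall>n\<ge>N1. dist ((xs \<circ> r) n) l < \<delta>"
      using l(3) \<delta>(1) unfolding lim_sequentially by metis
    obtain N2 :: nat where N2: "inverse (real (Suc N2)) < \<epsilon>" using reals_Archimedean[OF e] by auto
    define n where "n = max N1 N2"
    have rn: "n \<le> r n" using seq_suble[OF l(2)] .
    have "\<bar>xs (r n) - l\<bar> < \<delta>" using N1 unfolding n_def dist_real_def by auto
    moreover have "xs (r n) \<in> A" using xs(1) K_def by auto
    ultimately have 1: "h (xs (r n)) < h l + \<epsilon>" using \<delta> by auto
    have "1/(real (r n) + 1) \<le> 1/(real N2 + 1)" using rn unfolding n_def
      by (intro divide_left_mono) auto
    also have "\<dots> < \<epsilon>" using N2 by (simp add: inverse_eq_divide add.commute)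
    finally have "S - \<epsilon> < h (xs (r n))" using xs(2)[of "r n"] by linarith
    moreover have "3*\<epsilon> = S - h l" unfolding \<epsilon>_def by simp
    ultimately show False using 1 e by linarith
  qed
  have "\<forall>x'\<in>A. h x' \<le> h l"
  proof
    fix x' assume x': "x' \<in> A"
    show "h x' \<le> h l"
    proof (cases "x' \<le> Y")
      case True
      then have "x' \<in> K" using x' theta_min K_def by auto
      then have "h x' \<le> S" unfolding S_def using bdd by (intro cSup_upper) auto
      then show ?thesis using Sle by auto
    next
      case False
      then have "h x' < h \<theta>" using Y(2) y x' c_theta unfolding h_def by auto
      moreover have "h \<theta> \<le> S" unfolding S_def using bdd thK by (intro cSup_upper) auto
      ultimately show ?thesis using Sle by auto
    qed
  qed
  then show ?thesis using lA l(1) unfolding K_def h_def by auto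
qed

lemma phi_facts: "\<exists>M>0. \<forall>y\<in>{0..p}. \<exists>x\<in>A. \<bar>x\<bar> \<le> M \<and> phi A c y = y*x - c x
   \<and> (\<forall>x'\<in>A. y*x' - c x' \<le> phi A c y)"
proof -
  obtain Y where Y: "\<theta> \<le> Y" "\<forall>y\<in>{0..p}. \<forall>x\<in>A. x > Y \<longrightarrow> y*x - c x < y*\<theta>"
    using bound_Y by blast
  show ?thesis
  proof (rule exI[of _ "max \<bar>\<theta>\<bar> \<bar>Y\<bar> + 1"], intro conjI ballI)
    fix y assume y: "y \<in> {0..p}"
    obtain l where l: "l \<in> A" "\<theta> \<le> l" "l \<le> Y" "\<forall>x'\<in>A. y*x' - c x' \<le> y*l - c l"
      using argmax_exists[OF Y y] by blast
    have "phi A c y = y*l - c l" unfolding phi_def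
      using l by (intro cSup_eq_maximum) auto
    then show "\<exists>x\<in>A. \<bar>x\<bar> \<le> max \<bar>\<theta>\<bar> \<bar>Y\<bar> + 1 \<and> phi A c y = y*x - c x
         \<and> (\<forall>x'\<in>A. y*x' - c x' \<le> phi A c y)"
      using l by (intro bexI[of _ l]) auto
  qed auto
qed

lemma phi_upper: "y \<in> {0..p} \<Longrightarrow> x \<in> A \<Longrightarrow> y*x - c x \<le> phi A c y"
  using phi_facts by blast

lemma phi_attained: "y \<in> {0..p} \<Longrightarrow> \<exists>x\<in>A. phi A c y = y*x - c x"
  using phi_facts by blast

lemma phi_lip: "\<exists>L>0. \<forall>y\<in>{0..p}. \<forall>y'\<in>{0..p}. \<bar>phi A c y - phi A c y'\<bar> \<le> L * \<bar>y - y'\<bar>"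
proof -
  obtain M where M: "M > 0" "\<forall>y\<in>{0..p}. \<exists>x\<in>A. \<bar>x\<bar> \<le> M \<and> phi A c y = y*x - c x
     \<and> (\<forall>x'\<in>A. y*x' - c x' \<le> phi A c y)" using phi_facts by blast
  have one: "phi A c y - phi A c y' \<le> M * \<bar>y - y'\<bar>" if y: "y \<in> {0..p}" "y' \<in> {0..p}" for y y'
  proof -
    obtain x where x: "x \<in> A" "\<bar>x\<bar> \<le> M" "phi A c y = y*x - c x" using M y by blast
    have "y'*x - c x \<le> phi A c y'" using M y x by blast
    then have "phi A c y - phi A c y' \<le> (y - y') * x" using x by (simp add: algebra_simps)
    also have "\<dots> \<le> \<bar>y - y'\<bar> * \<bar>x\<bar>" by (metis abs_ge_self abs_mult)
    also have "\<dots> \<le> \<bar>y - y'\<bar> * M" using x by (intro mult_left_mono) auto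
    finally show ?thesis by (simp add: mult.commute)
  qed
  show ?thesis
    by (rule exI[of _ M]) (use M one in \<open>fastforce simp: abs_le_iff abs_minus_commute\<close>)
qed

lemma phi_cont: "continuous_on {0..p} (phi A c)"
proof -
  obtain L where L: "L > 0" "\<forall>y\<in>{0..p}. \<forall>y'\<in>{0..p}. \<bar>phi A c y - phi A c y'\<bar> \<le> L * \<bar>y - y'\<bar>"
    using phi_lip by blast
  have "L-lipschitz_on {0..p} (phi A c)"
    by (rule lipschitz_onI) (use L in \<open>auto simp: dist_real_def\<close>)
  then show ?thesis by (rule lipschitz_on_continuous_on)
qed

definition "u0 = (SOME u. u \<in> {0..p} \<and> (\<forall>y\<in>{0..p}. phi A c u \<le> phi A c y))"

lemma u0: "u0 \<in> {0..p}" "\<And>y. y \<in> {0..p} \<Longrightarrow> phi A c u0 \<le> phi A c y"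
proof -
  have "\<exists>u\<in>{0..p}. \<forall>y\<in>{0..p}. phi A c u \<le> phi A c y"
    using continuous_attains_inf[OF compact_Icc _ phi_cont] p_pos by auto
  then have "u0 \<in> {0..p} \<and> (\<forall>y\<in>{0..p}. phi A c u0 \<le> phi A c y)"
    unfolding u0_def by (rule someI_ex[where P="\<lambda>u. u \<in> {0..p} \<and> (\<forall>y\<in>{0..p}. phi A c u \<le> phi A c y)", OF bexE]) blast+
  then show "u0 \<in> {0..p}" "\<And>y. y \<in> {0..p} \<Longrightarrow> phi A c u0 \<le> phi A c y" by auto
qed

lemma ps_eq: "phi_star A c p = - phi A c u0"
proof -
  have "(INF y\<in>{0..p}. phi A c y) = phi A c u0"
    using u0 by (intro cInf_eq_minimum) auto
  then show ?thesis unfolding phi_star_def by simp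
qed

lemma denom_pos: "g > phi_star A c p \<Longrightarrow> u \<in> {0..p} \<Longrightarrow> phi A c u + g > 0"
  using u0(2)[of u] ps_eq by auto

definition "Mx = (SOME m. \<forall>y\<in>{0..p}. phi A c y \<le> m)"

lemma Mx: "y \<in> {0..p} \<Longrightarrow> phi A c y \<le> Mx"
proof -
  have "\<exists>u\<in>{0..p}. \<forall>y\<in>{0..p}. phi A c y \<le> phi A c u"
    using continuous_attains_sup[OF compact_Icc _ phi_cont] p_pos by auto
  then have "\<exists>m. \<forall>y\<in>{0..p}. phi A c y \<le> m" by blast
  then have "\<forall>y\<in>{0..p}. phi A c y \<le> Mx" unfolding Mx_def by (rule someI_ex)
  then show "y \<in> {0..p} \<Longrightarrow> phi A c y \<le> Mx" by auto
qed

lemma integrand_cont: "g > phi_star A c p \<Longrightarrow> S \<subseteq> {0..p} \<Longrightarrow> continuous_on S (\<lambda>u. 1/(phi A c u + g))"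
  by (rule continuous_on_subset[of "{0..p}"], rule continuous_intros, 
      auto intro!: continuous_intros phi_cont dest: denom_pos[of g] simp del: divide_const_simps)

lemma integrand_int: "g > phi_star A c p \<Longrightarrow> 0 \<le> a \<Longrightarrow> d \<le> p \<Longrightarrow> (\<lambda>u. 1/(phi A c u + g)) integrable_on {a..d}"
  by (rule integrable_continuous_interval, rule integrand_cont) auto

definition "F g = integral {0..p} (\<lambda>u. 1/(phi A c u + g))"

lemma F_upper: assumes "g > phi_star A c p" shows "F g \<le> p / (g - phi_star A c p)"
proof -
  have "F g \<le> integral {0..p} (\<lambda>u. 1/(g - phi_star A c p))"
    unfolding F_def
  proof (rule integral_le[OF integrand_int[OF assms]])
    fix u assume u: "u \<in> {0..p}"
    have "g - phi_star A c p \<le> phi A c u + g" using u0(2)[OF u] ps_eq by simp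
    then show "1/(phi A c u + g) \<le> 1/(g - phi_star A c p)" using assms
      by (intro divide_left_mono) auto
  qed auto
  also have "\<dots> = p / (g - phi_star A c p)" using p_pos by simp
  finally show ?thesis .
qed

lemma F_strict: assumes "phi_star A c p < g" "g < g'" shows "F g' < F g"
proof -
  define \<delta> where "\<delta> = (g' - g) / ((Mx + g) * (Mx + g'))"
  have Mxg: "Mx + g > 0" using denom_pos[OF assms(1), of 0] Mx[of 0] p_pos by auto
  have dpos: "\<delta> > 0" unfolding \<delta>_def using Mxg assms by auto
  have g'ps: "phi_star A c p < g'" using assms by auto
  have i1: "(\<lambda>u. 1/(phi A c u + g) - 1/(phi A c u + g')) integrable_on {0..p}"
    by (intro integrable_diff integrand_int assms g'ps) auto
  have "integral {0..p} (\<lambda>u. \<delta>) \<le> integral {0..p} (\<lambda>u. 1/(phi A c u + g) - 1/(phi A c u + g'))"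
  proof (rule integral_le[OF _ i1])
    fix u assume u: "u \<in> {0..p}"
    have P: "0 < phi A c u + g" "phi A c u + g \<le> Mx + g" using denom_pos[OF assms(1) u] Mx[OF u] by auto
    have Q: "0 < phi A c u + g'" "phi A c u + g' \<le> Mx + g'" using denom_pos[OF g'ps u] Mx[OF u] by auto
    have "(phi A c u + g) * (phi A c u + g') \<le> (Mx + g) * (Mx + g')"
      using P Q by (intro mult_mono) auto
    then have "\<delta> \<le> (g' - g) / ((phi A c u + g) * (phi A c u + g'))"
      unfolding \<delta>_def using assms P Q by (intro divide_left_mono) auto
    also have "\<dots> = 1/(phi A c u + g) - 1/(phi A c u + g')"
      using P Q by (simp add: field_simps)
    finally show "\<delta> \<le> 1/(phi A c u + g) - 1/(phi A c u + g')" .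
  qed auto
  also have "\<dots> = F g - F g'" unfolding F_def
    by (intro integral_diff integrand_int assms g'ps) auto
  finally show ?thesis using mult_pos_pos[OF p_pos dpos] p_pos by simp
qed

lemma F_cont: assumes "phi_star A c p < g1" shows "continuous_on {g1..g2} F"
proof -
  define e where "e = g1 - phi_star A c p"
  have e: "e > 0" using assms e_def by auto
  have "(p / e^2)-lipschitz_on {g1..g2} F"
  proof (rule lipschitz_onI)
    fix g g' assume g: "g \<in> {g1..g2}" "g' \<in> {g1..g2}"
    have gps: "phi_star A c p < g" "phi_star A c p < g'" using g assms by auto
    have "\<bar>F g - F g'\<bar> \<le> p * (\<bar>g - g'\<bar> / e^2)" unfolding F_def
    proof (rule integral_diff_bound[OF integrand_int[OF gps(1)] integrand_int[OF gps(2)]])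
      fix u assume u: "u \<in> {0..p}"
      have P: "e \<le> phi A c u + g" "e \<le> phi A c u + g'" using u0(2)[OF u] ps_eq g e_def by auto
      have pp: "(phi A c u + g) * (phi A c u + g') > 0" using P e by (intro mult_pos_pos) auto
      have "1/(phi A c u + g) - 1/(phi A c u + g') = (g' - g) / ((phi A c u + g) * (phi A c u + g'))"
        using P e by (simp add: field_simps)
      then have "\<bar>1/(phi A c u + g) - 1/(phi A c u + g')\<bar> = \<bar>g - g'\<bar> / ((phi A c u + g) * (phi A c u + g'))"
        using pp by (simp add: abs_minus_commute)
      also have "\<dots> \<le> \<bar>g - g'\<bar> / (e * e)"
        using P e by (intro divide_left_mono mult_mono) auto
      finally show "\<bar>1/(phi A c u + g) - 1/(phi A c u + g')\<bar> \<le> \<bar>g - g'\<bar> / e^2"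
        by (simp add: power2_eq_square)
    qed (use p_pos in auto)
    then show "dist (F g) (F g') \<le> p / e^2 * dist g g'" by (simp add: dist_real_def)
  qed (use p_pos e in auto)
  then show ?thesis by (rule lipschitz_on_continuous_on)
qed

lemma F_big: "\<exists>e>0. F (phi_star A c p + e) > \<kappa>"
proof -
  obtain L where L: "L > 0" "\<forall>y\<in>{0..p}. \<forall>y'\<in>{0..p}. \<bar>phi A c y - phi A c y'\<bar> \<le> L * \<bar>y - y'\<bar>"
    using phi_lip by blast
  define q where "q = p/2"
  have q: "q > 0" using p_pos q_def by auto
  define e where "e = (L*q) * exp(-(L*\<kappa>+1))"
  have e: "e > 0" using L q e_def by auto
  define g where "g = phi_star A c p + e"
  have gps: "phi_star A c p < g" using e g_def by auto
  define f where "f u = 1/(phi A c u + g)" for u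
  have fpos: "u \<in> {0..p} \<Longrightarrow> 0 \<le> f u" for u using denom_pos[OF gps] f_def by (simp add: less_imp_le)
  have flow: "1/(L*\<bar>u-u0\<bar>+e) \<le> f u" if u: "u \<in> {0..p}" for u
  proof -
    have "phi A c u + g = (phi A c u - phi A c u0) + e" using ps_eq g_def by simp
    moreover have "phi A c u - phi A c u0 \<le> L*\<bar>u-u0\<bar>" using L u u0(1) by fastforce
    moreover have "phi A c u - phi A c u0 \<ge> 0" using u0(2)[OF u] by simp
    ultimately show ?thesis unfolding f_def using e by (intro divide_left_mono) auto
  qed
  have fint: "0 \<le> a \<Longrightarrow> d \<le> p \<Longrightarrow> f integrable_on {a..d}" for a d
    unfolding f_def using integrand_int[OF gps] by blast
  define V where "V = (ln(L*q+e) - ln e)/L"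
  have main: "V \<le> F g"
  proof (cases "u0 \<le> q")
    case True
    have sub: "{u0..u0+q} \<subseteq> {0..p}" using True u0(1) q_def by auto
    have hi: "((\<lambda>u. 1/(L*(u-u0)+e)) has_integral V) {u0..u0+q}"
      using log_int1[OF L(1) e, of u0 "u0+q"] q unfolding V_def by simp
    have "V \<le> integral {u0..u0+q} f"
    proof -
      have "integral {u0..u0+q} (\<lambda>u. 1/(L*(u-u0)+e)) \<le> integral {u0..u0+q} f"
      proof (rule integral_le)
        show "(\<lambda>u. 1/(L*(u-u0)+e)) integrable_on {u0..u0+q}" using hi by blast
        show "f integrable_on {u0..u0+q}" using fint sub u0(1) True q_def by auto
        fix u assume "u \<in> {u0..u0+q}"
        then show "1/(L*(u-u0)+e) \<le> f u" using flow[of u] sub by auto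
      qed
      then show ?thesis using integral_unique[OF hi] by simp
    qed
    also have "\<dots> \<le> integral {0..p} f"
      using sub fpos fint[of 0 p] fint[of u0 "u0+q"] u0(1) True q_def by (intro integral_subset_le) auto
    finally show ?thesis unfolding F_def f_def .
  next
    case False
    have sub: "{u0-q..u0} \<subseteq> {0..p}" using False u0(1) q_def by auto
    have hi: "((\<lambda>u. 1/(L*(u0-u)+e)) has_integral V) {u0-q..u0}"
      using log_int2[OF L(1) e, of "u0-q" u0] q unfolding V_def by simp
    have "V \<le> integral {u0-q..u0} f"
    proof -
      have "integral {u0-q..u0} (\<lambda>u. 1/(L*(u0-u)+e)) \<le> integral {u0-q..u0} f"
      proof (rule integral_le)
        show "(\<lambda>u. 1/(L*(u0-u)+e)) integrable_on {u0-q..u0}" using hi by blast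
        show "f integrable_on {u0-q..u0}" using fint sub u0(1) False q_def by auto
        fix u assume "u \<in> {u0-q..u0}"
        then show "1/(L*(u0-u)+e) \<le> f u" using flow[of u] sub by auto
      qed
      then show ?thesis using integral_unique[OF hi] by simp
    qed
    also have "\<dots> \<le> integral {0..p} f"
      using sub fpos fint[of 0 p] fint[of "u0-q" u0] u0(1) False q_def by (intro integral_subset_le) auto
    finally show ?thesis unfolding F_def f_def .
  qed
  have "ln e = ln (L*q) - (L*\<kappa>+1)" unfolding e_def using L q by (simp add: ln_mult)
  moreover have "ln (L*q) \<le> ln (L*q+e)" using L(1) q e by (intro ln_mono) auto
  ultimately have "L*\<kappa>+1 \<le> ln(L*q+e) - ln e" by simp
  then have "(L*\<kappa>+1)/L \<le> V" unfolding V_def using L by (intro divide_right_mono) auto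
  moreover have "(L*\<kappa>+1)/L = \<kappa> + 1/L" using L by (simp add: field_simps)
  moreover have "1/L > 0" using L by simp
  ultimately have "\<kappa> < V" by linarith
  then show ?thesis using main e g_def by auto
qed

lemma gamma_ex: "\<exists>!g. phi_star A c p < g \<and> (1/2) * \<sigma>\<^sup>2 * integral {0..p} (\<lambda>u. 1 / (phi A c u + g)) = b"
proof -
  define \<kappa> where "\<kappa> = 2*b/\<sigma>^2"
  have kpos: "\<kappa> > 0" using b_pos sigma_pos \<kappa>_def by auto
  have iff: "(1/2) * \<sigma>\<^sup>2 * integral {0..p} (\<lambda>u. 1 / (phi A c u + g)) = b \<longleftrightarrow> F g = \<kappa>" for g
    unfolding F_def \<kappa>_def using sigma_pos by (auto simp: field_simps)
  obtain e where e: "e > 0" "F (phi_star A c p + e) > \<kappa>" using F_big by blast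
  define g1 where "g1 = phi_star A c p + e"
  define g2 where "g2 = phi_star A c p + p/\<kappa> + 1"
  have g1: "phi_star A c p < g1" using e g1_def by auto
  have g2: "phi_star A c p < g2" using g2_def p_pos kpos by (auto intro: add_pos_pos)
  have "F g2 \<le> p / (p/\<kappa> + 1)" using F_upper[OF g2] g2_def by simp
  also have "\<dots> < \<kappa>" using kpos p_pos by (simp add: field_simps)
  finally have F2: "F g2 < \<kappa>" .
  have le: "g1 \<le> g2"
  proof (rule ccontr)
    assume "\<not> g1 \<le> g2"
    then have "F g1 < F g2" using F_strict[OF g2] by auto
    then show False using F2 e g1_def by auto
  qed
  obtain g where g: "g1 \<le> g" "g \<le> g2" "F g = \<kappa>"
    using IVT2'[of F g2 \<kappa> g1, OF _ _ le F_cont[OF g1]] F2 e g1_def by auto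
  show ?thesis
  proof (rule ex1I[of _ g])
    show "phi_star A c p < g \<and> (1/2) * \<sigma>\<^sup>2 * integral {0..p} (\<lambda>u. 1 / (phi A c u + g)) = b"
      using g g1 iff by auto
    fix g' assume g': "phi_star A c p < g' \<and> (1/2) * \<sigma>\<^sup>2 * integral {0..p} (\<lambda>u. 1 / (phi A c u + g')) = b"
    then have "F g' = \<kappa>" using iff by auto
    then show "g' = g" using F_strict[of g g'] F_strict[of g' g] g g' g1 by fastforce
  qed
qed

definition "gm = gamma A c \<sigma> b p"

lemma gm: "phi_star A c p < gm" "(1/2) * \<sigma>\<^sup>2 * integral {0..p} (\<lambda>u. 1 / (phi A c u + gm)) = b"
  using theI'[OF gamma_ex] unfolding gm_def gamma_def by auto

definition "k = (1/2) * \<sigma>\<^sup>2"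
lemma kpos: "k > 0" unfolding k_def using sigma_pos by simp

definition "qf u = 1 / (phi A c u + gm)"

lemma qf_pos: "u \<in> {0..p} \<Longrightarrow> qf u > 0" using denom_pos[OF gm(1)] qf_def by simp

lemma qf_cont: "continuous_on {0..p} qf" unfolding qf_def using integrand_cont[OF gm(1)] by simp

lemma qf_int: "0 \<le> a \<Longrightarrow> d \<le> p \<Longrightarrow> qf integrable_on {a..d}"
  unfolding qf_def using integrand_int[OF gm(1)] by blast

lemma G_eq: "G A c \<sigma> b p = (\<lambda>v. k * integral {0..v} qf)"
  by (rule ext) (simp add: G_def gm_def[symmetric] k_def qf_def[abs_def])

abbreviation "GG \<equiv> G A c \<sigma> b p"

lemma G_deriv: "v \<in> {0..p} \<Longrightarrow> (GG has_real_derivative k * qf v) (at v within {0..p})"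
  unfolding G_eq by (intro DERIV_cmult integral_has_real_derivative qf_cont)

lemma G_cont: "continuous_on {0..p} GG"
  unfolding G_eq by (intro continuous_intros indefinite_integral_continuous_1 qf_int) auto

lemma G0: "GG 0 = 0" unfolding G_eq by simp
lemma Gp: "GG p = b" using gm(2) unfolding G_eq k_def qf_def by simp

lemma G_strict: assumes "0 \<le> v" "v < v'" "v' \<le> p" shows "GG v < GG v'"
proof -
  have "integral {0..v} qf + integral {v..v'} qf = integral {0..v'} qf"
    using assms by (intro Henstock_Kurzweil_Integration.integral_combine qf_int) auto
  moreover have "integral {v..v'} (\<lambda>u. 1/(Mx + gm)) \<le> integral {v..v'} qf"
  proof (rule integral_le)
    show "qf integrable_on {v..v'}" using assms by (intro qf_int) auto
    fix u assume u: "u \<in> {v..v'}"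
    then have u': "u \<in> {0..p}" using assms by auto
    show "1/(Mx + gm) \<le> qf u" unfolding qf_def
      using Mx[OF u'] denom_pos[OF gm(1) u'] by (intro divide_left_mono) auto
  qed auto
  moreover have "integral {v..v'} (\<lambda>u. 1/(Mx + gm)) > 0"
    using assms Mx[of 0] denom_pos[OF gm(1), of 0] p_pos by auto
  ultimately have "integral {0..v} qf < integral {0..v'} qf" by linarith
  then show ?thesis unfolding G_eq using kpos by simp
qed

lemma G_mono: "0 \<le> v \<Longrightarrow> v \<le> v' \<Longrightarrow> v' \<le> p \<Longrightarrow> GG v \<le> GG v'"
  using G_strict by (cases "v = v'") (auto simp: less_le)

lemma G_range: "v \<in> {0..p} \<Longrightarrow> GG v \<in> {0..b}"
  using G_mono[of 0 v] G_mono[of v p] G0 Gp by auto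

lemma G_ex1: assumes "z \<in> {0..b}" shows "\<exists>!v. v \<in> {0..p} \<and> GG v = z"
proof -
  obtain v where v: "0 \<le> v" "v \<le> p" "GG v = z"
    using IVT'[of GG 0 z p, OF _ _ _ G_cont] G0 Gp assms p_pos by auto
  show ?thesis
  proof (rule ex1I[of _ v])
    show "v \<in> {0..p} \<and> GG v = z" using v by auto
    fix w assume "w \<in> {0..p} \<and> GG w = z"
    then show "w = v" using G_strict[of v w] G_strict[of w v] v by (cases "w < v"; cases "v < w") auto
  qed
qed

abbreviation "V \<equiv> vinv A c \<sigma> b p"

lemma V_props: "z \<in> {0..b} \<Longrightarrow> V z \<in> {0..p} \<and> GG (V z) = z"
  unfolding vinv_def using theI'[OF G_ex1] by blast

lemma V_G: "v \<in> {0..p} \<Longrightarrow> V (GG v) = v"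
  unfolding vinv_def by (rule the1_equality[OF G_ex1[OF G_range]]) auto

lemma G_image: "GG ` {0..p} = {0..b}"
proof
  show "GG ` {0..p} \<subseteq> {0..b}" using G_range by auto
  show "{0..b} \<subseteq> GG ` {0..p}"
  proof
    fix z assume "z \<in> {0..b}"
    then show "z \<in> GG ` {0..p}" using V_props[of z] by (metis image_eqI)
  qed
qed

lemma V_cont: "continuous_on {0..b} V"
  using continuous_on_inv[OF G_cont compact_Icc] V_G G_image by auto

lemma V_strict: "z \<in> {0..b} \<Longrightarrow> z' \<in> {0..b} \<Longrightarrow> z < z' \<Longrightarrow> V z < V z'"
proof (rule ccontr)
  assume z: "z \<in> {0..b}" "z' \<in> {0..b}" "z < z'" "\<not> V z < V z'"
  then have "GG (V z') \<le> GG (V z)" using V_props[of z] V_props[of z'] by (intro G_mono) auto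
  then show False using V_props[OF z(1)] V_props[OF z(2)] z(3) by auto
qed

lemma V0: "V 0 = 0" using V_G[of 0] G0 p_pos by auto
lemma Vb: "V b = p" using V_G[of p] Gp p_pos by auto

lemma V_nonneg: "z \<in> {0..b} \<Longrightarrow> 0 \<le> V z" using V_props by auto

lemma V_int: "z \<in> {0<..<b} \<Longrightarrow> V z \<in> {0<..<p}"
proof -
  assume z: "z \<in> {0<..<b}"
  then have "V 0 < V z" "V z < V b" using V_strict[of 0 z] V_strict[of z b] b_pos by auto
  then show "V z \<in> {0<..<p}" using V0 Vb by auto
qed

lemma V_deriv: assumes z: "z \<in> {0<..<b}"
  shows "(V has_real_derivative (phi A c (V z) + gm) / k) (at z)"
proof -
  have vz: "V z \<in> {0<..<p}" using V_int[OF z] .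
  have "(GG has_real_derivative k * qf (V z)) (at (V z))"
    using G_deriv[of "V z"] vz at_within_interior[of "V z" "{0..p}"] by auto
  moreover have "k * qf (V z) \<noteq> 0" using kpos qf_pos[of "V z"] vz by auto
  moreover have "isCont V z" using continuous_on_interior[OF V_cont] z by auto
  ultimately have "(V has_real_derivative inverse (k * qf (V z))) (at z)"
    using z V_props by (intro DERIV_inverse_function[where a=0 and b=b]) auto
  moreover have "inverse (k * qf (V z)) = (phi A c (V z) + gm) / k"
    unfolding qf_def by (simp add: field_simps)
  ultimately show ?thesis by simp
qed

abbreviation "FF \<equiv> ff A c \<sigma> b p"

lemma FF_eq: "FF = (\<lambda>z. integral {0..z} V)" by (rule ext) (simp add: ff_def)

lemma FF_deriv_within: "z \<in> {0..b} \<Longrightarrow> (FF has_real_derivative V z) (at z within {0..b})"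
  unfolding FF_eq by (intro integral_has_real_derivative V_cont)

lemma FF_deriv: "z \<in> {0<..<b} \<Longrightarrow> (FF has_real_derivative V z) (at z)"
  using FF_deriv_within[of z] at_within_interior[of z "{0..b}"] by auto

lemma dFF: "z \<in> {0<..<b} \<Longrightarrow> deriv FF z = V z"
  using FF_deriv by (rule DERIV_imp_deriv)

lemma dFF_deriv: "z \<in> {0<..<b} \<Longrightarrow> (deriv FF has_real_derivative (phi A c (V z) + gm) / k) (at z)"
  by (rule has_field_derivative_transform_within_open[where S="{0<..<b}", OF V_deriv _ _ dFF[symmetric]]) auto

lemma ddFF: "z \<in> {0<..<b} \<Longrightarrow> deriv (deriv FF) z = (phi A c (V z) + gm) / k"
  using dFF_deriv by (rule DERIV_imp_deriv)

lemma H_cont: "continuous_on {0..b} (\<lambda>z. (phi A c (V z) + gm) / k)"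
  using kpos V_props by (intro continuous_intros continuous_on_compose2[OF phi_cont V_cont]) auto

lemma FF_cont: "continuous_on {0..b} FF"
  using FF_deriv_within by (rule DERIV_continuous_on)

lemma V_integrable: "0 \<le> r \<Longrightarrow> s \<le> b \<Longrightarrow> V integrable_on {r..s}"
  by (intro integrable_continuous_interval continuous_on_subset[OF V_cont]) auto

lemma main:
  shows "(\<forall>z\<in>{0..b}. ff A c \<sigma> b p z \<ge> 0)
    \<and> mono_on {0..b} (ff A c \<sigma> b p)
    \<and> strict_convex_on {0..b} (ff A c \<sigma> b p)
    \<and> C2_closed b (ff A c \<sigma> b p)
    \<and> (\<forall>z\<in>{0<..<b}.
          (\<exists>x\<in>A. gamma A c \<sigma> b p = (1/2) * \<sigma>\<^sup>2 * deriv (deriv (ff A c \<sigma> b p)) z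
                                  - x * deriv (ff A c \<sigma> b p) z + c x)
        \<and> (\<forall>x\<in>A. gamma A c \<sigma> b p \<le> (1/2) * \<sigma>\<^sup>2 * deriv (deriv (ff A c \<sigma> b p)) z
                                  - x * deriv (ff A c \<sigma> b p) z + c x))
    \<and> (ff A c \<sigma> b p has_real_derivative 0) (at_right 0)
    \<and> (ff A c \<sigma> b p has_real_derivative p) (at_left b)"
proof (intro conjI)
  show "\<forall>z\<in>{0..b}. FF z \<ge> 0"
  proof
    fix z assume z: "z \<in> {0..b}"
    show "FF z \<ge> 0" unfolding FF_eq
      using z V_nonneg by (intro integral_nonneg V_integrable) auto
  qed
  show "mono_on {0..b} FF"
  proof (rule mono_onI)
    fix r s assume rs: "r \<in> {0..b}" "s \<in> {0..b}" "r \<le> s"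
    have "integral {0..r} V + integral {r..s} V = integral {0..s} V"
      using rs by (intro Henstock_Kurzweil_Integration.integral_combine V_integrable) auto
    moreover have "0 \<le> integral {r..s} V" using rs V_nonneg by (intro integral_nonneg V_integrable) auto
    ultimately show "FF r \<le> FF s" unfolding FF_eq by linarith
  qed
  show "strict_convex_on {0..b} FF"
    by (rule strict_convex_from_deriv[OF b_pos FF_cont FF_deriv]) (auto intro: V_strict)
  show "C2_closed b FF"
    unfolding C2_closed_def
  proof (intro conjI ballI)
    fix z assume z: "z \<in> {0<..<b}"
    show "FF differentiable (at z)" using FF_deriv[OF z] by (auto simp: real_differentiable_def)
    show "deriv FF differentiable (at z)" using dFF_deriv[OF z] by (auto simp: real_differentiable_def)
  next
    show "continuous_on {0<..<b} (deriv (deriv FF))"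
      using continuous_on_subset[OF H_cont, of "{0<..<b}", OF greaterThanLessThan_subseteq_atLeastAtMost_iff[THEN iffD2]] ddFF
      by (subst continuous_on_cong[OF refl]) auto
  next
    have "(V \<longlongrightarrow> V 0) (at 0 within {0..b})" using V_cont b_pos unfolding continuous_on_def by auto
    then have "(deriv FF \<longlongrightarrow> V 0) (at 0 within {0..b})"
      by (rule Lim_transform_within[OF _ b_pos]) (auto simp: dist_real_def dFF)
    then show "\<exists>L. (deriv FF \<longlongrightarrow> L) (at_right 0)" using at_within_Icc_at_right[OF b_pos] by auto
  next
    have "(V \<longlongrightarrow> V b) (at b within {0..b})" using V_cont b_pos unfolding continuous_on_def by auto
    then have "(deriv FF \<longlongrightarrow> V b) (at b within {0..b})"
      by (rule Lim_transform_within[OF _ b_pos]) (auto simp: dist_real_def dFF)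
    then show "\<exists>L. (deriv FF \<longlongrightarrow> L) (at_left b)" using at_within_Icc_at_left[OF b_pos] by auto
  next
    let ?H = "\<lambda>z. (phi A c (V z) + gm) / k"
    have "(?H \<longlongrightarrow> ?H 0) (at 0 within {0..b})" using H_cont b_pos unfolding continuous_on_def by auto
    then have "(deriv (deriv FF) \<longlongrightarrow> ?H 0) (at 0 within {0..b})"
      by (rule Lim_transform_within[OF _ b_pos]) (auto simp: dist_real_def ddFF)
    then show "\<exists>L. (deriv (deriv FF) \<longlongrightarrow> L) (at_right 0)" using at_within_Icc_at_right[OF b_pos] by auto
  next
    let ?H = "\<lambda>z. (phi A c (V z) + gm) / k"
    have "(?H \<longlongrightarrow> ?H b) (at b within {0..b})" using H_cont b_pos unfolding continuous_on_def by auto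
    then have "(deriv (deriv FF) \<longlongrightarrow> ?H b) (at b within {0..b})"
      by (rule Lim_transform_within[OF _ b_pos]) (auto simp: dist_real_def ddFF)
    then show "\<exists>L. (deriv (deriv FF) \<longlongrightarrow> L) (at_left b)" using at_within_Icc_at_left[OF b_pos] by auto
  qed
  show "\<forall>z\<in>{0<..<b}.
          (\<exists>x\<in>A. gamma A c \<sigma> b p = (1/2) * \<sigma>\<^sup>2 * deriv (deriv FF) z - x * deriv FF z + c x)
        \<and> (\<forall>x\<in>A. gamma A c \<sigma> b p \<le> (1/2) * \<sigma>\<^sup>2 * deriv (deriv FF) z - x * deriv FF z + c x)"
  proof
    fix z assume z: "z \<in> {0<..<b}"
    define v where "v = V z"
    have v: "v \<in> {0..p}" using V_int[OF z] v_def by auto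
    have e: "(1/2) * \<sigma>\<^sup>2 * deriv (deriv FF) z - x * deriv FF z + c x = phi A c v + gm - (v * x - c x)" for x
    proof -
      have "(1/2) * \<sigma>\<^sup>2 * deriv (deriv FF) z = phi A c v + gm"
        using ddFF[OF z] kpos unfolding v_def k_def by simp
      then show ?thesis using dFF[OF z] unfolding v_def by (simp add: algebra_simps)
    qed
    have g: "gamma A c \<sigma> b p = gm" by (simp add: gm_def)
    obtain x where x: "x \<in> A" "phi A c v = v * x - c x" using phi_attained[OF v] by blast
    show "(\<exists>x\<in>A. gamma A c \<sigma> b p = (1/2) * \<sigma>\<^sup>2 * deriv (deriv FF) z - x * deriv FF z + c x)
        \<and> (\<forall>x\<in>A. gamma A c \<sigma> b p \<le> (1/2) * \<sigma>\<^sup>2 * deriv (deriv FF) z - x * deriv FF z + c x)"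
      unfolding e g
    proof (intro conjI ballI bexI[of _ x])
      show "gm = phi A c v + gm - (v * x - c x)" using x by simp
      show "x \<in> A" using x by simp
      fix x' assume "x' \<in> A"
      then show "gm \<le> phi A c v + gm - (v * x' - c x')" using phi_upper[OF v] by fastforce
    qed
  qed
  show "(FF has_real_derivative 0) (at_right 0)"
    using FF_deriv_within[of 0] V0 b_pos at_within_Icc_at_right[OF b_pos] by auto
  show "(FF has_real_derivative p) (at_left b)"
    using FF_deriv_within[of b] Vb b_pos at_within_Icc_at_left[OF b_pos] by auto
qed

end

theorem proposition7:
  fixes A :: "real set" and c :: "real \<Rightarrow> real" and b \<sigma> p \<theta> :: real
  assumes b_pos: "b > 0" and sigma_pos: "\<sigma> > 0" and p_pos: "p > 0"
    and A_closed: "closed A"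
    and theta_min: "\<theta> \<in> A" "\<forall>x\<in>A. \<theta> \<le> x"
    and c_mono: "mono_on A c"
    and c_leftcont: "\<forall>x\<in>A. continuous (at x within (A \<inter> {..x})) c"
    and c_theta: "c \<theta> = 0"
    and c_pos: "\<forall>x\<in>A. x > \<theta> \<longrightarrow> c x > 0"
    and c_growth: "\<not> bdd_above A \<longrightarrow>
        filterlim (\<lambda>y. Inf {c x / x | x. x \<in> A \<and> x \<ge> y}) at_top at_top"
  shows "(\<forall>z\<in>{0..b}. ff A c \<sigma> b p z \<ge> 0)
    \<and> mono_on {0..b} (ff A c \<sigma> b p)
    \<and> strict_convex_on {0..b} (ff A c \<sigma> b p)
    \<and> C2_closed b (ff A c \<sigma> b p)
    \<and> (\<forall>z\<in>{0<..<b}.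
          (\<exists>x\<in>A. gamma A c \<sigma> b p = (1/2) * \<sigma>\<^sup>2 * deriv (deriv (ff A c \<sigma> b p)) z
                                  - x * deriv (ff A c \<sigma> b p) z + c x)
        \<and> (\<forall>x\<in>A. gamma A c \<sigma> b p \<le> (1/2) * \<sigma>\<^sup>2 * deriv (deriv (ff A c \<sigma> b p)) z
                                  - x * deriv (ff A c \<sigma> b p) z + c x))
    \<and> (ff A c \<sigma> b p has_real_derivative 0) (at_right 0)
    \<and> (ff A c \<sigma> b p has_real_derivative p) (at_left b)"
proof -
  interpret P7 A c b \<sigma> p \<theta>
    by unfold_locales (use assms in auto)
  show ?thesis by (rule main)
qed

end
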